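(* Let $\Omega\subset\mathbb R^n$ be a bounded domain, $1\le m\le n$, $T>0$, $Q_T=\Omega\times(0,T)$, $\partial'Q_T=(\Omega\times\{0\})\cup(\partial\Omega\times[0,T])$, $f$ a function on $\bar Q_T$ and $\varphi$ a function on $\partial'Q_T$ with $\varphi(\cdot,0)\in C^2(\Omega)$. Assume that $f\ge\nu_m>0$ on $\bar Q_T$, that there is a point $x_0\in\Omega$ such that $\varphi_{xx}(x_0,0)$ is $(m-1)$-positive, and that there is a point $x_1\in\Omega$ such that $\varphi_{xx}(x_1,0)$ is not $(m-1)$-positive. Then there is no $u\in C^{2,1}(\bar Q_T)$ with $E_m[u]=f$ in $\bar Q_T$ and $u=\varphi$ on $\partial'Q_T$, no matter how small $T>0$ is.
   Context: For $S\in\mathrm{Sym}(n)$ and $0\le p\le n$, $T_p(S)$ is the sum of all principal $p\times p$ minors of $S$, with $T_0(S)=1$. For $1\le k\le n$, $K_k=\{S\in\mathrm{Sym}(n):T_p(S)>0,\ p=1,\dots,k\}$; $S$ is $k$-positive if $S\in K_k$; by convention every matrix is $0$-positive. For $u(x,t)$, $u_{xx}$ is its Hessian in $x$ and $E_m[u]=-u_t\,T_{m-1}(u_{xx})+T_m(u_{xx})$. *)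

theory Defs
  imports "HOL-Analysis.Analysis"
begin

definition Tsum :: "nat \<Rightarrow> real^'n^'n \<Rightarrow> real" where
  "Tsum p S = (\<Sum>I \<in> {I. card I = p}.
      \<Sum>\<sigma> \<in> {\<sigma>. \<sigma> permutes I}. of_int (sign \<sigma>) * (\<Prod>i\<in>I. S $ i $ \<sigma> i))"

definition symmetric_mat :: "real^'n^'n \<Rightarrow> bool" where
  "symmetric_mat S \<longleftrightarrow> transpose S = S"

definition kpositive :: "nat \<Rightarrow> real^'n^'n \<Rightarrow> bool" where
  "kpositive k S \<longleftrightarrow> k = 0 \<or> (symmetric_mat S \<and> (\<forall>p\<in>{1..k}. Tsum p S > 0))"

text \<open>E_m[u] at a point, in terms of u_t and the spatial Hessian u_xx.\<close>
definition Em :: "nat \<Rightarrow> real \<Rightarrow> real^'n^'n \<Rightarrow> real" where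
  "Em m ut H = - ut * Tsum (m - 1) H + Tsum m H"

text \<open>u in C^{2,1}(closure Q_T), Q_T = \<Omega> x (0,T), with spatial gradient Du,
  spatial Hessian H and time derivative ut: these derivatives exist in Q_T and
  u, Du, H, ut are continuous on the closure (continuous extensions).\<close>
definition C21_closure ::
  "('n::finite) itself \<Rightarrow> (real^'n) set \<Rightarrow> real \<Rightarrow> (real^'n \<Rightarrow> real \<Rightarrow> real) \<Rightarrow>
   (real^'n \<Rightarrow> real \<Rightarrow> real^'n) \<Rightarrow> (real^'n \<Rightarrow> real \<Rightarrow> real^'n^'n) \<Rightarrow>
   (real^'n \<Rightarrow> real \<Rightarrow> real) \<Rightarrow> bool" where
  "C21_closure _ \<Omega> T u Du H ut \<longleftrightarrow>
     (\<forall>x\<in>\<Omega>. \<forall>t\<in>{0<..<T}.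
        ((\<lambda>y. u y t) has_derivative (\<lambda>h. Du x t \<bullet> h)) (at x) \<and>
        ((\<lambda>y. Du y t) has_derivative (\<lambda>h. H x t *v h)) (at x) \<and>
        ((\<lambda>s. u x s) has_real_derivative ut x t) (at t)) \<and>
     continuous_on (closure \<Omega> \<times> {0..T}) (\<lambda>(x,t). u x t) \<and>
     continuous_on (closure \<Omega> \<times> {0..T}) (\<lambda>(x,t). Du x t) \<and>
     continuous_on (closure \<Omega> \<times> {0..T}) (\<lambda>(x,t). H x t) \<and>
     continuous_on (closure \<Omega> \<times> {0..T}) (\<lambda>(x,t). ut x t)"

end

theory Submission
  imports Defs "HOL-Computational_Algebra.Fundamental_Theorem_Algebra"
begin

definition Tg :: "nat \<Rightarrow> 'a::comm_ring_1^'n^'n \<Rightarrow> 'a" where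
  "Tg p S = (\<Sum>I \<in> {I. card I = p}.
      \<Sum>\<sigma> \<in> {\<sigma>. \<sigma> permutes I}. of_int (sign \<sigma>) * (\<Prod>i\<in>I. S $ i $ \<sigma> i))"

lemma Tsum_Tg: "Tsum p S = Tg p S"
  by (simp add: Tsum_def Tg_def)

definition minorJ :: "'n set \<Rightarrow> 'a::comm_ring_1^'n^'n \<Rightarrow> 'a" where
  "minorJ J S = (\<Sum>\<sigma> \<in> {\<sigma>. \<sigma> permutes J}. of_int (sign \<sigma>) * (\<Prod>i\<in>J. S $ i $ \<sigma> i))"

lemma permutes_UNIV_fix:
  "{\<sigma>. \<sigma> permutes (UNIV::'n::finite set) \<and> (\<forall>i\<in>UNIV - J. \<sigma> i = i)} = {\<sigma>. \<sigma> permutes J}"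
  unfolding permutes_def by auto

lemma det_shift_expand:
  fixes A :: "'a::comm_ring_1^'n^'n" and c :: 'a
  shows "det (\<chi> i j. (if i = j then c else 0) + A$i$j) =
         (\<Sum>J\<in>Pow (UNIV::'n set). c ^ (CARD('n) - card J) * minorJ J A)"
proof -
  have "det (\<chi> i j. (if i = j then c else 0) + A$i$j) =
     (\<Sum>\<sigma>\<in>{\<sigma>. \<sigma> permutes UNIV}. of_int (sign \<sigma>) *
        (\<Sum>J\<in>Pow UNIV. (\<Prod>i\<in>J. A$i$\<sigma> i) * (\<Prod>i\<in>UNIV-J. (if i = \<sigma> i then c else 0))))"
    unfolding det_def
  proof (intro sum.cong refl)
    fix \<sigma> :: "'n \<Rightarrow> 'n"
    have "(\<Prod>i\<in>UNIV. (\<chi> i j. (if i = j then c else 0) + A$i$j) $ i $ \<sigma> i) =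
          (\<Prod>i\<in>UNIV. A$i$\<sigma> i + (if i = \<sigma> i then c else 0))"
      by (simp add: add.commute)
    also have "\<dots> = (\<Sum>J\<in>Pow UNIV. (\<Prod>i\<in>J. A$i$\<sigma> i) * (\<Prod>i\<in>UNIV-J. (if i = \<sigma> i then c else 0)))"
      by (rule prod_add) simp
    finally show "of_int (sign \<sigma>) * (\<Prod>i\<in>UNIV. (\<chi> i j. (if i = j then c else 0) + A$i$j) $ i $ \<sigma> i) =
       of_int (sign \<sigma>) * (\<Sum>J\<in>Pow UNIV. (\<Prod>i\<in>J. A$i$\<sigma> i) * (\<Prod>i\<in>UNIV-J. (if i = \<sigma> i then c else 0)))"
      by simp
  qed
  also have "\<dots> = (\<Sum>J\<in>Pow UNIV. \<Sum>\<sigma>\<in>{\<sigma>. \<sigma> permutes UNIV}. of_int (sign \<sigma>) *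
        ((\<Prod>i\<in>J. A$i$\<sigma> i) * (\<Prod>i\<in>UNIV-J. (if i = \<sigma> i then c else 0))))"
    by (simp add: sum_distrib_left sum.swap[of _ "{\<sigma>. \<sigma> permutes UNIV}"])
  also have "\<dots> = (\<Sum>J\<in>Pow UNIV. c ^ (CARD('n) - card J) * minorJ J A)"
  proof (rule sum.cong[OF refl])
    fix J :: "'n set" assume J: "J \<in> Pow UNIV"
    have pr: "(\<Prod>i\<in>UNIV-J. (if i = \<sigma> i then c else 0)) =
          (if (\<forall>i\<in>UNIV - J. \<sigma> i = i) then c ^ (CARD('n) - card J) else 0)" for \<sigma> :: "'n \<Rightarrow> 'n"
    proof (cases "\<forall>i\<in>UNIV - J. \<sigma> i = i")
      case True
      then have "(\<Prod>i\<in>UNIV-J. (if i = \<sigma> i then c else 0)) = (\<Prod>i\<in>UNIV-J. c)"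
        by (intro prod.cong) auto
      then show ?thesis using True by (simp add: card_Diff_subset)
    next
      case False
      then obtain i where "i \<in> UNIV - J" "\<sigma> i \<noteq> i" by auto
      then have "(\<Prod>i\<in>UNIV-J. (if i = \<sigma> i then c else 0)) = 0"
        by (intro prod_zero) (auto intro!: bexI[of _ i])
      then show ?thesis using False by (simp only: if_False)
    qed
    have "(\<Sum>\<sigma>\<in>{\<sigma>. \<sigma> permutes UNIV}. of_int (sign \<sigma>) *
        ((\<Prod>i\<in>J. A$i$\<sigma> i) * (\<Prod>i\<in>UNIV-J. (if i = \<sigma> i then c else 0)))) =
        (\<Sum>\<sigma>\<in>{\<sigma>. \<sigma> permutes UNIV}. if (\<forall>i\<in>UNIV - J. \<sigma> i = i) then
           c ^ (CARD('n) - card J) * (of_int (sign \<sigma>) * (\<Prod>i\<in>J. A$i$\<sigma> i)) else 0)"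
      by (intro sum.cong refl) (simp add: pr)
    also have "\<dots> = (\<Sum>\<sigma>\<in>{\<sigma>. \<sigma> permutes UNIV \<and> (\<forall>i\<in>UNIV - J. \<sigma> i = i)}.
           c ^ (CARD('n) - card J) * (of_int (sign \<sigma>) * (\<Prod>i\<in>J. A$i$\<sigma> i)))"
      by (subst sum.inter_filter[symmetric]) (auto intro!: finite_permutations)
    also have "\<dots> = c ^ (CARD('n) - card J) * minorJ J A"
      unfolding permutes_UNIV_fix minorJ_def by (simp add: sum_distrib_left)
    finally show "(\<Sum>\<sigma>\<in>{\<sigma>. \<sigma> permutes UNIV}. of_int (sign \<sigma>) *
        ((\<Prod>i\<in>J. A$i$\<sigma> i) * (\<Prod>i\<in>UNIV-J. (if i = \<sigma> i then c else 0)))) =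
        c ^ (CARD('n) - card J) * minorJ J A" .
  qed
  finally show ?thesis .
qed

lemma Tg_minorJ: "Tg p A = (\<Sum>J\<in>{J. card J = p}. minorJ J A)"
  by (simp add: Tg_def minorJ_def)

definition charP :: "'a::comm_ring_1^'n^'n \<Rightarrow> 'a poly" where
  "charP A = (\<Sum>p\<le>CARD('n). monom (Tg p A) (CARD('n) - p))"

lemma poly_charP:
  fixes A :: "'a::comm_ring_1^'n^'n"
  shows "poly (charP A) c = det (\<chi> i j. (if i = j then c else 0) + A$i$j)"
proof -
  have "det (\<chi> i j. (if i = j then c else 0) + A$i$j) =
         (\<Sum>J\<in>Pow (UNIV::'n set). c ^ (CARD('n) - card J) * minorJ J A)"
    by (rule det_shift_expand)
  also have "\<dots> = (\<Sum>p\<in>{..CARD('n)}. \<Sum>J\<in>{J\<in>Pow UNIV. card J = p}. c ^ (CARD('n) - card J) * minorJ J A)"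
    by (rule sum.group[symmetric]) (auto simp: card_mono)
  also have "\<dots> = (\<Sum>p\<in>{..CARD('n)}. c ^ (CARD('n) - p) * Tg p A)"
    by (intro sum.cong refl) (simp add: Tg_minorJ sum_distrib_left)
  finally show ?thesis
    by (simp add: charP_def poly_sum poly_monom mult.commute)
qed

lemma Tg_0: "Tg 0 (A::'a::comm_ring_1^'n^'n) = 1"
proof -
  have "{I::'n set. card I = 0} = {{}}" by auto
  moreover have "{\<sigma>. \<sigma> permutes ({}::'n set)} = {id}" by (auto simp: permutes_empty)
  ultimately show ?thesis by (simp add: Tg_def)
qed

lemma coeff_charP:
  fixes A :: "'a::comm_ring_1^'n^'n"
  shows "coeff (charP A) i = (if i \<le> CARD('n) then Tg (CARD('n) - i) A else 0)"
proof -
  have "coeff (charP A) i = (\<Sum>p\<le>CARD('n). if CARD('n) - p = i then Tg p A else 0)"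
    by (simp add: charP_def coeff_sum coeff_monom)
  also have "\<dots> = (\<Sum>p\<in>{p. p \<le> CARD('n) \<and> CARD('n) - p = i}. Tg p A)"
    by (subst sum.inter_filter[symmetric]) (auto intro: sum.cong)
  also have "\<dots> = (if i \<le> CARD('n) then Tg (CARD('n) - i) A else 0)"
  proof (cases "i \<le> CARD('n)")
    case True
    then have "{p. p \<le> CARD('n) \<and> CARD('n) - p = i} = {CARD('n) - i}" by auto
    then show ?thesis using True by simp
  next
    case False
    have e: "{p. p \<le> CARD('n) \<and> CARD('n) - p = i} = {}" using False by auto
    show ?thesis using False by (subst e) simp
  qed
  finally show ?thesis .
qed

lemma Tg_of_real:
  fixes S :: "real^'n^'n"
  shows "Tg p (\<chi> i j. (of_real (S$i$j) :: 'a::{real_algebra_1,comm_ring_1})) = of_real (Tg p S)"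
  by (simp add: Tg_def of_real_sum of_real_mult of_real_prod)

lemma charP_of_real:
  fixes S :: "real^'n^'n"
  shows "charP (\<chi> i j. (of_real (S$i$j) :: 'a::{real_algebra_1,comm_ring_1})) = map_poly of_real (charP S)"
  by (rule poly_eqI) (simp add: coeff_charP coeff_map_poly Tg_of_real)


lemma det_zero_kernel:
  fixes M :: "complex^'n^'n"
  assumes "det M = 0"
  shows "\<exists>v. v \<noteq> 0 \<and> M *v v = 0"
proof -
  have lin: "Vector_Spaces.linear (*s) (*s) ((*v) M)"
    by (rule matrix_vector_mul_linear_gen)
  have "\<not> inj ((*v) M)"
    using det_nz_iff_inj_gen[OF lin] assms by (simp add: matrix_of_matrix_vector_mul)
  then obtain x y where "x \<noteq> y" "M *v x = M *v y" unfolding inj_def by auto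
  then show ?thesis
    by (intro exI[of _ "x - y"]) (simp add: matrix_vector_mult_diff_distrib)
qed

lemma symmetric_root_real:
  fixes S :: "real^'n^'n"
  assumes sym: "\<And>i j. S$i$j = S$j$i"
    and z: "poly (charP (\<chi> i j. complex_of_real (S$i$j))) z = 0"
  shows "Im z = 0"
proof -
  define M where "M = (\<chi> i j. (if i = j then z else 0) + (\<chi> i j. complex_of_real (S$i$j))$i$j)"
  have "det M = 0" using z by (simp add: poly_charP M_def)
  then obtain v where v: "v \<noteq> 0" "M *v v = 0" using det_zero_kernel by blast
  have row: "z * v$i + (\<Sum>j\<in>UNIV. complex_of_real (S$i$j) * v$j) = 0" for i
  proof -
    have "(M *v v)$i = 0" using v by simp
    moreover have "(M *v v)$i = (\<Sum>j\<in>UNIV. ((if i = j then z else 0) + complex_of_real (S$i$j)) * v$j)"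
      by (simp add: M_def matrix_vector_mult_def)
    moreover have "\<dots> = z * v$i + (\<Sum>j\<in>UNIV. complex_of_real (S$i$j) * v$j)"
    proof -
      have "(\<Sum>j\<in>UNIV. ((if i = j then z else 0) + complex_of_real (S$i$j)) * v$j) =
            (\<Sum>j\<in>UNIV. (if i = j then z * v$j else 0)) + (\<Sum>j\<in>UNIV. complex_of_real (S$i$j) * v$j)"
        unfolding distrib_right sum.distrib
        by (intro arg_cong2[where f="(+)"] sum.cong refl) auto
      then show ?thesis by simp
    qed
    ultimately show ?thesis by simp
  qed
  define q where "q = (\<Sum>i\<in>UNIV. \<Sum>j\<in>UNIV. cnj (v$i) * complex_of_real (S$i$j) * v$j)"
  define N where "N = (\<Sum>i\<in>UNIV. cnj (v$i) * v$i)"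
  have "z * N + q = 0"
  proof -
    have "z * N + q = (\<Sum>i\<in>UNIV. cnj (v$i) * (z * v$i + (\<Sum>j\<in>UNIV. complex_of_real (S$i$j) * v$j)))"
      by (simp add: N_def q_def sum_distrib_left sum_distrib_right sum.distrib algebra_simps)
    also have "\<dots> = 0" by (simp add: row)
    finally show ?thesis .
  qed
  have "cnj q = q"
  proof -
    have "cnj q = (\<Sum>i\<in>UNIV. \<Sum>j\<in>UNIV. v$i * complex_of_real (S$i$j) * cnj (v$j))"
      by (simp add: q_def)
    also have "\<dots> = (\<Sum>j\<in>UNIV. \<Sum>i\<in>UNIV. v$i * complex_of_real (S$i$j) * cnj (v$j))"
      by (rule sum.swap)
    also have "\<dots> = q" unfolding q_def
      by (intro sum.cong refl) (simp add: sym mult_ac)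
    finally show ?thesis .
  qed
  then have Iq: "Im q = 0" by (metis cnj.sel(2) equal_neg_zero)
  have NR: "N = of_real (\<Sum>i\<in>UNIV. (cmod (v$i))^2)"
    unfolding N_def of_real_sum by (intro sum.cong refl) (simp only: of_real_power[symmetric] complex_norm_square mult.commute)
  have "(\<Sum>i\<in>UNIV. (cmod (v$i))^2) > 0"
  proof -
    obtain i where "v$i \<noteq> 0" using v(1) by (metis vec_eq_iff zero_index)
    then have "(cmod (v$i))^2 > 0" by simp
    then show ?thesis
      by (intro sum_pos2[where i=i]) auto
  qed
  moreover have "Im (z * N + q) = 0" using \<open>z * N + q = 0\<close> by simp
  then have "Im z * (\<Sum>i\<in>UNIV. (cmod (v$i))^2) = 0" using Iq NR by simp
  ultimately show ?thesis by simp
qed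


lemma pderiv_real_roots:
  fixes q :: "complex poly"
  assumes deg: "degree q \<ge> 1" and rr: "\<forall>z. poly q z = 0 \<longrightarrow> Im z = 0"
  shows "\<forall>z. poly (pderiv q) z = 0 \<longrightarrow> Im z = 0"
proof (intro allI impI, rule ccontr)
  fix z assume pz: "poly (pderiv q) z = 0" and Iz: "Im z \<noteq> 0"
  obtain r where qr: "smult (lead_coeff q) (\<Prod>i<degree q. [:-r i, 1:]) = q"
    using complex_poly_decompose' by blast
  define d where "d = degree q"
  have lc: "lead_coeff q \<noteq> 0" using deg by auto
  have Ir: "Im (r i) = 0" if "i < d" for i
  proof -
    have "poly q (r i) = 0"
      by (subst qr[symmetric]) (use that in \<open>auto simp: d_def poly_prod intro!: prod_zero\<close>)
    then show ?thesis using rr by blast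
  qed
  define w where "w i = z - r i" for i
  have wnz: "w i \<noteq> 0" if "i < d" for i
    using Ir[OF that] Iz by (auto simp: w_def)
  have pd: "pderiv q = smult (lead_coeff q) (\<Sum>a<d. \<Prod>i\<in>{..<d} - {a}. [:-r i, 1:])"
    by (subst qr[symmetric]) (simp add: d_def pderiv_smult pderiv_prod pderiv_pCons)
  have "poly (pderiv q) z = lead_coeff q * (\<Sum>a<d. \<Prod>i\<in>{..<d} - {a}. w i)"
    by (simp add: pd poly_sum poly_prod w_def)
  also have "(\<Sum>a<d. \<Prod>i\<in>{..<d} - {a}. w i) = (\<Prod>i<d. w i) * (\<Sum>a<d. 1 / w a)"
    by (simp add: sum_distrib_left prod_diff1 wnz)
  finally have "(\<Prod>i<d. w i) * (\<Sum>a<d. 1 / w a) = 0" using pz lc by simp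
  moreover have "(\<Prod>i<d. w i) \<noteq> 0" using wnz by simp
  ultimately have s0: "(\<Sum>a<d. 1 / w a) = 0" by simp
  have "Im (\<Sum>a<d. 1 / w a) = (\<Sum>a<d. - Im z / ((Re (w a))\<^sup>2 + (Im (w a))\<^sup>2))"
    by (auto simp: Im_sum Im_divide w_def Ir intro!: sum.cong)
  also have "\<dots> = - Im z * (\<Sum>a<d. 1 / ((Re (w a))\<^sup>2 + (Im (w a))\<^sup>2))"
    by (simp add: sum_distrib_left)
  finally have e: "Im z * (\<Sum>a<d. 1 / ((Re (w a))\<^sup>2 + (Im (w a))\<^sup>2)) = 0" using s0 by simp
  have "(\<Sum>a<d. 1 / ((Re (w a))\<^sup>2 + (Im (w a))\<^sup>2)) > 0"
  proof (rule sum_pos)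
    show "finite {..<d}" by simp
    show "{..<d} \<noteq> {}" using deg by (auto simp: d_def lessThan_empty_iff)
    fix a assume "a \<in> {..<d}"
    then have "w a \<noteq> 0" using wnz by simp
    then have "(Re (w a))\<^sup>2 + (Im (w a))\<^sup>2 > 0"
      by (metis complex_eq_iff zero_complex.sel add_pos_nonneg power2_less_0 not_le sum_power2_gt_zero_iff)
    then show "1 / ((Re (w a))\<^sup>2 + (Im (w a))\<^sup>2) > 0" by simp
  qed
  with e Iz show False by simp
qed

lemma higher_pderiv_real_roots:
  fixes q :: "complex poly"
  assumes rr: "\<forall>z. poly q z = 0 \<longrightarrow> Im z = 0" and k: "k < degree q"
  shows "\<forall>z. poly ((pderiv ^^ k) q) z = 0 \<longrightarrow> Im z = 0"
  using k
proof (induction k)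
  case 0 then show ?case using rr by simp
next
  case (Suc k)
  have "degree ((pderiv ^^ k) q) \<ge> 1" using Suc.prems by (simp add: degree_higher_pderiv)
  then show ?case using pderiv_real_roots[of "(pderiv ^^ k) q"] Suc by simp
qed


lemma coeff_mult_lin:
  fixes p :: "'a::comm_ring_1 poly"
  shows "coeff (p * [:a, 1:]) j = a * coeff p j + (if j = 0 then 0 else coeff p (j - 1))"
proof -
  have "p * [:a, 1:] = smult a p + pCons 0 p"
    by (simp add: mult_pCons_right)
  then show ?thesis by (cases j) (simp_all add: mult.commute)
qed

lemma prod_lin_pos:
  fixes c :: "nat \<Rightarrow> real"
  assumes "\<And>i. i < d \<Longrightarrow> c i > 0"
  shows "(j \<le> d \<longrightarrow> coeff (\<Prod>i<d. [:c i, 1:]) j > 0) \<and> (j > d \<longrightarrow> coeff (\<Prod>i<d. [:c i, 1:]) j = 0)"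
  using assms
proof (induction d arbitrary: j)
  case 0 then show ?case by (cases j) simp_all
next
  case (Suc d)
  have IH: "(j \<le> d \<longrightarrow> coeff (\<Prod>i<d. [:c i, 1:]) j > 0) \<and> (j > d \<longrightarrow> coeff (\<Prod>i<d. [:c i, 1:]) j = 0)" for j
    using Suc by auto
  have cd: "c d > 0" using Suc by auto
  have e: "coeff (\<Prod>i<Suc d. [:c i, 1:]) j =
       c d * coeff (\<Prod>i<d. [:c i, 1:]) j + (if j = 0 then 0 else coeff (\<Prod>i<d. [:c i, 1:]) (j - 1))"
    by (simp only: prod.lessThan_Suc coeff_mult_lin)
  show ?case
  proof (cases "j = 0")
    case True then show ?thesis using e IH[of 0] cd by simp
  next
    case False
    then show ?thesis using e IH[of j] IH[of "j - 1"] cd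
      by (cases "j \<le> d") (auto simp: add_nonneg_pos add_pos_pos)
  qed
qed

lemma prod_lin_of_real:
  fixes c :: "nat \<Rightarrow> real"
  shows "coeff (\<Prod>i<d. [:complex_of_real (c i), 1:]) j = complex_of_real (coeff (\<Prod>i<d. [:c i, 1:]) j)"
proof (induction d arbitrary: j)
  case 0 then show ?case by (cases j) simp_all
next
  case (Suc d) then show ?case by (simp only: prod.lessThan_Suc coeff_mult_lin) simp
qed

lemma poly_map_of_real: "poly (map_poly complex_of_real p) (complex_of_real x) = complex_of_real (poly p x)"
  by (induction p) (auto simp: map_poly_pCons)

lemma real_rooted_pos_coeffs:
  fixes Q :: "real poly"
  assumes rr: "\<forall>z. poly (map_poly complex_of_real Q) z = 0 \<longrightarrow> Im z = 0"
    and pos: "\<forall>t\<ge>0. poly Q t > 0"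
    and i: "i \<le> degree Q"
  shows "coeff Q i > 0"
proof -
  define Qc where "Qc = map_poly complex_of_real Q"
  have dQ: "degree Qc = degree Q" unfolding Qc_def by (rule degree_map_poly) simp
  have cQ: "coeff Qc j = complex_of_real (coeff Q j)" for j
    by (simp add: Qc_def coeff_map_poly)
  obtain r where qr: "smult (lead_coeff Qc) (\<Prod>i<degree Qc. [:-r i, 1:]) = Qc"
    using complex_poly_decompose' by blast
  have lc: "lead_coeff Q \<noteq> 0"
  proof
    assume "lead_coeff Q = 0" then have "Q = 0" by simp
    then show False using pos by auto
  qed
  define d where "d = degree Q"
  have rroot: "poly Qc (r i) = 0" if "i < d" for i
    by (subst qr[symmetric]) (use that in \<open>auto simp: d_def dQ poly_prod intro!: prod_zero\<close>)
  define c where "c i = - Re (r i)" for i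
  have rc: "r i = - complex_of_real (c i)" if "i < d" for i
  proof -
    have "Im (r i) = 0" using rr rroot[OF that] by (simp add: Qc_def)
    then show ?thesis by (simp add: c_def complex_eq_iff)
  qed
  have cpos: "c i > 0" if "i < d" for i
  proof (rule ccontr)
    assume "\<not> c i > 0"
    then have "- c i \<ge> 0" by simp
    then have "poly Q (- c i) > 0" using pos by blast
    moreover have "complex_of_real (poly Q (- c i)) = poly Qc (r i)"
      using rc[OF that] by (simp add: Qc_def poly_map_of_real[symmetric])
    ultimately show False using rroot[OF that] by simp
  qed
  have ident: "coeff Q j = lead_coeff Q * coeff (\<Prod>i<d. [:c i, 1:]) j" for j
  proof -
    have "coeff Qc j = lead_coeff Qc * coeff (\<Prod>i<d. [:complex_of_real (c i), 1:]) j"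
    proof -
      have "(\<Prod>i<d. [:-r i, 1:]) = (\<Prod>i<d. [:complex_of_real (c i), 1:])"
        by (intro prod.cong refl) (simp add: rc)
      then show ?thesis by (subst qr[symmetric]) (simp add: d_def dQ)
    qed
    also have "\<dots> = complex_of_real (lead_coeff Q * coeff (\<Prod>i<d. [:c i, 1:]) j)"
      by (simp add: prod_lin_of_real cQ dQ)
    finally show ?thesis by (simp only: cQ of_real_eq_iff)
  qed
  have "lead_coeff Q > 0"
  proof -
    have "coeff (\<Prod>i<d. [:c i, 1:]) 0 > 0" using prod_lin_pos[of d c 0] cpos by simp
    moreover have "coeff Q 0 > 0" using pos by (simp add: poly_0_coeff_0[symmetric])
    ultimately show ?thesis using ident[of 0] by (simp add: zero_less_mult_iff)
  qed
  moreover have "coeff (\<Prod>i<d. [:c i, 1:]) i > 0"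
    using prod_lin_pos[of d c i] cpos i by (simp add: d_def)
  ultimately show ?thesis using ident[of i] by simp
qed


lemma degree_charP: "degree (charP (A::'a::comm_ring_1^'n^'n)) = CARD('n)"
proof (rule antisym)
  show "degree (charP A) \<le> CARD('n)"
    by (rule degree_le) (simp add: coeff_charP)
  show "CARD('n) \<le> degree (charP A)"
    by (rule le_degree) (simp add: coeff_charP Tg_0)
qed

lemma coeff_Q:
  fixes S :: "real^'n^'n"
  assumes "j \<le> CARD('n)"
  shows "coeff ((pderiv ^^ (CARD('n) - j)) (charP S)) i =
     pochhammer (of_nat (Suc i)) (CARD('n) - j) * (if i \<le> j then Tsum (j - i) S else 0)"
proof -
  have a: "i + (CARD('n) - j) \<le> CARD('n) \<longleftrightarrow> i \<le> j" using assms by arith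
  have b: "i \<le> j \<Longrightarrow> CARD('n) - (i + (CARD('n) - j)) = j - i" using assms by arith
  show ?thesis using a b by (simp add: coeff_higher_pderiv coeff_charP Tsum_Tg)
qed

lemma of_real_pochhammer_c: "complex_of_real (pochhammer x m) = pochhammer (complex_of_real x) m"
  by (induction m) (simp_all add: pochhammer_Suc)

lemma degree_Q:
  fixes S :: "real^'n^'n"
  assumes "j \<le> CARD('n)"
  shows "degree ((pderiv ^^ (CARD('n) - j)) (charP S)) = j"
  using assms by (simp add: degree_higher_pderiv degree_charP)

lemma roots_Q:
  fixes S :: "real^'n^'n"
  assumes sym: "\<And>i j. S$i$j = S$j$i" and j: "1 \<le> j" "j \<le> CARD('n)"
  shows "\<forall>z. poly (map_poly complex_of_real ((pderiv ^^ (CARD('n) - j)) (charP S))) z = 0 \<longrightarrow> Im z = 0"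
proof -
  define SC where "SC = (\<chi> i j. complex_of_real (S$i$j))"
  have e: "map_poly complex_of_real ((pderiv ^^ (CARD('n) - j)) (charP S)) =
        (pderiv ^^ (CARD('n) - j)) (charP SC)"
    by (rule poly_eqI) (simp add: coeff_map_poly coeff_higher_pderiv SC_def charP_of_real of_real_pochhammer_c)
  have rr: "\<forall>z. poly (charP SC) z = 0 \<longrightarrow> Im z = 0"
    using symmetric_root_real[OF sym] by (simp add: SC_def)
  show ?thesis unfolding e
    by (rule higher_pderiv_real_roots[OF rr]) (use j in \<open>simp add: degree_charP\<close>)
qed

lemma ray:
  fixes S :: "real^'n^'n"
  assumes sym: "\<And>i j. S$i$j = S$j$i" and j: "1 \<le> j" "j \<le> CARD('n)"
    and nn: "\<forall>q. 1 \<le> q \<and> q < j \<longrightarrow> Tsum q S \<ge> 0" and pj: "Tsum j S > 0"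
    and q: "q \<le> j"
  shows "Tsum q S > 0"
proof -
  define Q where "Q = (pderiv ^^ (CARD('n) - j)) (charP S)"
  have T0: "Tsum 0 S = 1" by (simp add: Tsum_Tg Tg_0)
  have cQ: "coeff Q i = pochhammer (of_nat (Suc i)) (CARD('n) - j) * (if i \<le> j then Tsum (j - i) S else 0)" for i
    unfolding Q_def by (rule coeff_Q[OF j(2)])
  have pp: "pochhammer (of_nat (Suc i) :: real) m > 0" for i m
    by (rule pochhammer_pos) simp
  have dQ: "degree Q = j" unfolding Q_def by (rule degree_Q[OF j(2)])
  have cnn: "coeff Q i \<ge> 0" for i
  proof -
    have "i \<le> j \<Longrightarrow> Tsum (j - i) S \<ge> 0"
      using nn T0 pj by (cases "j - i = 0"; cases "j - i = j") (auto)
    then show ?thesis unfolding cQ using pp[of i "CARD('n) - j"] by (simp add: mult_nonneg_nonneg order_less_imp_le)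
  qed
  have c0: "coeff Q 0 > 0" unfolding cQ using pp[of 0] pj by simp
  have pos: "\<forall>t\<ge>0. poly Q t > 0"
  proof (intro allI impI)
    fix t :: real assume t: "t \<ge> 0"
    have "poly Q t = (\<Sum>i\<le>degree Q. coeff Q i * t ^ i)" by (rule poly_altdef)
    also have "\<dots> = coeff Q 0 + (\<Sum>i\<in>{1..degree Q}. coeff Q i * t ^ i)"
      by (simp add: atMost_atLeast0 sum.atLeast_Suc_atMost)
    also have "\<dots> \<ge> coeff Q 0"
      using cnn t by (simp add: sum_nonneg)
    finally show "poly Q t > 0" using c0 by simp
  qed
  have "coeff Q (j - q) > 0"
    by (rule real_rooted_pos_coeffs) (use roots_Q[OF sym j] pos dQ in \<open>auto simp: Q_def\<close>)
  then show ?thesis unfolding cQ using q pp[of "j - q" "CARD('n) - j"]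
    by (simp add: zero_less_mult_iff)
qed

lemma core:
  fixes S :: "real^'n^'n" and k :: nat and ut :: real
  assumes sym: "\<And>i j. S$i$j = S$j$i" and k: "1 \<le> k" "k + 1 \<le> CARD('n)"
    and nn: "\<forall>p\<in>{1..k}. Tsum p S \<ge> 0"
    and eq: "- ut * Tsum k S + Tsum (k + 1) S > 0"
  shows "\<forall>p\<in>{1..k}. Tsum p S > 0"
proof -
  have Tk: "Tsum k S > 0"
  proof (rule ccontr)
    assume "\<not> Tsum k S > 0"
    then have "Tsum k S = 0" using nn k by force
    then have "Tsum (k + 1) S > 0" using eq by simp
    then have "Tsum k S > 0"
      by (intro ray[where j="k+1" and q=k]) (use sym nn k in auto)
    then show False using \<open>Tsum k S = 0\<close> by simp
  qed
  show ?thesis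
  proof
    fix p assume "p \<in> {1..k}"
    then show "Tsum p S > 0"
      by (intro ray[where j=k and q=p]) (use sym nn k Tk in auto)
  qed
qed


lemma line_deriv:
  fixes F :: "real^'n \<Rightarrow> real"
  assumes "(F has_derivative L) (at (p + s *\<^sub>R v))"
  shows "((\<lambda>s. F (p + s *\<^sub>R v)) has_real_derivative L v) (at s)"
proof -
  have d1: "((\<lambda>s. p + s *\<^sub>R v) has_derivative (\<lambda>t. t *\<^sub>R v)) (at s)"
    by (intro derivative_eq_intros) auto
  have bl: "bounded_linear L" using assms by (rule has_derivative_bounded_linear)
  have "((\<lambda>s. F (p + s *\<^sub>R v)) has_derivative (\<lambda>t. L (t *\<^sub>R v))) (at s)"
    using has_derivative_compose[OF d1 assms] .
  moreover have "(\<lambda>t. L (t *\<^sub>R v)) = (*) (L v)"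
    using linear_cmul[OF bounded_linear.linear[OF bl]] by (auto simp: mult.commute)
  ultimately show ?thesis by (simp add: has_field_derivative_def)
qed

lemma mixed:
  fixes f :: "real^'n \<Rightarrow> real" and Df :: "real^'n \<Rightarrow> real^'n" and H :: "real^'n \<Rightarrow> real^'n^'n"
  assumes der: "\<forall>y\<in>\<Omega>. (f has_derivative (\<lambda>v. Df y \<bullet> v)) (at y) \<and> (Df has_derivative (\<lambda>v. H y *v v)) (at y)"
    and h: "h > 0"
    and sub: "\<forall>s t. 0 \<le> s \<and> s \<le> h \<and> 0 \<le> t \<and> t \<le> h \<longrightarrow> x + s *\<^sub>R axis i 1 + t *\<^sub>R axis j 1 \<in> \<Omega>"
  shows "\<exists>s t. 0 \<le> s \<and> s \<le> h \<and> 0 \<le> t \<and> t \<le> h \<and>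
     f (x + h *\<^sub>R axis i 1 + h *\<^sub>R axis j 1) - f (x + h *\<^sub>R axis i 1) - f (x + h *\<^sub>R axis j 1) + f x
       = h^2 * H (x + s *\<^sub>R axis i 1 + t *\<^sub>R axis j 1) $ i $ j"
proof -
  define ei where "ei = (axis i 1 :: real^'n)"
  define ej where "ej = (axis j 1 :: real^'n)"
  define g where "g s = f (x + h *\<^sub>R ej + s *\<^sub>R ei) - f (x + s *\<^sub>R ei)" for s
  have gd: "DERIV g s :> Df (x + h *\<^sub>R ej + s *\<^sub>R ei) $ i - Df (x + s *\<^sub>R ei) $ i"
    if "0 \<le> s" "s \<le> h" for s
  proof -
    have m1: "x + h *\<^sub>R ej + s *\<^sub>R ei \<in> \<Omega>" using sub[rule_format, of s h] that h
      by (simp add: ei_def ej_def algebra_simps)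
    have m2: "x + s *\<^sub>R ei \<in> \<Omega>" using sub[rule_format, of s 0] that h by (simp add: ei_def)
    have "((\<lambda>s. f (x + h *\<^sub>R ej + s *\<^sub>R ei)) has_real_derivative Df (x + h *\<^sub>R ej + s *\<^sub>R ei) \<bullet> ei) (at s)"
      by (rule line_deriv) (use der m1 in auto)
    moreover have "((\<lambda>s. f (x + s *\<^sub>R ei)) has_real_derivative Df (x + s *\<^sub>R ei) \<bullet> ei) (at s)"
      by (rule line_deriv) (use der m2 in auto)
    ultimately show ?thesis unfolding g_def
      by (auto intro!: derivative_eq_intros simp: ei_def inner_axis)
  qed
  obtain \<xi> where \<xi>: "0 < \<xi>" "\<xi> < h" "g h - g 0 = (h - 0) * (Df (x + h *\<^sub>R ej + \<xi> *\<^sub>R ei) $ i - Df (x + \<xi> *\<^sub>R ei) $ i)"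
    using MVT2[OF h gd] by blast
  define k where "k t = Df (x + \<xi> *\<^sub>R ei + t *\<^sub>R ej) $ i" for t
  have kd: "DERIV k t :> H (x + \<xi> *\<^sub>R ei + t *\<^sub>R ej) $ i $ j" if "0 \<le> t" "t \<le> h" for t
  proof -
    have m: "x + \<xi> *\<^sub>R ei + t *\<^sub>R ej \<in> \<Omega>" using sub \<xi> that by (simp add: ei_def ej_def)
    have "((\<lambda>y. Df y $ i) has_derivative (\<lambda>v. (H (x + \<xi> *\<^sub>R ei + t *\<^sub>R ej) *v v) $ i))
            (at (x + \<xi> *\<^sub>R ei + t *\<^sub>R ej))"
      using bounded_linear.has_derivative[OF bounded_linear_vec_nth, of Df] der m by blast
    from line_deriv[OF this] show ?thesis
      by (simp add: k_def[abs_def] ej_def matrix_vector_mult_basis column_def)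
  qed
  obtain \<eta> where \<eta>: "0 < \<eta>" "\<eta> < h" "k h - k 0 = (h - 0) * H (x + \<xi> *\<^sub>R ei + \<eta> *\<^sub>R ej) $ i $ j"
    using MVT2[OF h kd] by blast
  have "f (x + h *\<^sub>R ei + h *\<^sub>R ej) - f (x + h *\<^sub>R ei) - f (x + h *\<^sub>R ej) + f x = g h - g 0"
    by (simp add: g_def algebra_simps)
  also have "\<dots> = h * (k h - k 0)"
    using \<xi>(3) by (simp add: k_def algebra_simps)
  also have "\<dots> = h^2 * H (x + \<xi> *\<^sub>R ei + \<eta> *\<^sub>R ej) $ i $ j"
    using \<eta>(3) by (simp add: power2_eq_square)
  finally show ?thesis using \<xi> \<eta>
    by (intro exI[of _ \<xi>] exI[of _ \<eta>]) (simp add: ei_def ej_def)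
qed

lemma entry_le_norm: "\<bar>(A::real^'n^'m) $ i $ j\<bar> \<le> norm A"
proof -
  have "\<bar>A $ i $ j\<bar> \<le> norm (A $ i)" using component_le_norm_cart[of "A $ i" j] by simp
  also have "\<dots> \<le> norm A" by (rule Finite_Cartesian_Product.norm_nth_le)
  finally show ?thesis .
qed

lemma hessian_sym:
  fixes f :: "real^'n \<Rightarrow> real" and Df :: "real^'n \<Rightarrow> real^'n" and H :: "real^'n \<Rightarrow> real^'n^'n"
  assumes op: "open \<Omega>"
    and der: "\<forall>y\<in>\<Omega>. (f has_derivative (\<lambda>v. Df y \<bullet> v)) (at y) \<and> (Df has_derivative (\<lambda>v. H y *v v)) (at y)"
    and cont: "continuous_on \<Omega> H" and x: "x \<in> \<Omega>"
  shows "H x $ i $ j = H x $ j $ i"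
proof (rule ccontr)
  assume ne: "H x $ i $ j \<noteq> H x $ j $ i"
  define e where "e = \<bar>H x $ i $ j - H x $ j $ i\<bar> / 2"
  have e: "e > 0" using ne by (simp add: e_def)
  obtain d1 where d1: "d1 > 0" "\<forall>y\<in>\<Omega>. dist y x < d1 \<longrightarrow> dist (H y) (H x) < e"
    using cont x e unfolding continuous_on_iff by blast
  obtain d2 where d2: "d2 > 0" "ball x d2 \<subseteq> \<Omega>" using op x open_contains_ball by blast
  define h where "h = min d1 d2 / 3"
  have h: "h > 0" using d1 d2 by (simp add: h_def)
  have close: "dist (x + s *\<^sub>R axis a 1 + t *\<^sub>R axis b 1) x < min d1 d2"
    if "0 \<le> s" "s \<le> h" "0 \<le> t" "t \<le> h" for s t and a b :: 'n
  proof -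
    have "dist (x + s *\<^sub>R axis a 1 + t *\<^sub>R axis b 1) x = norm (s *\<^sub>R (axis a 1 :: real^'n) + t *\<^sub>R axis b 1)"
      by (simp add: dist_norm algebra_simps)
    also have "\<dots> \<le> norm (s *\<^sub>R (axis a 1 :: real^'n)) + norm (t *\<^sub>R (axis b 1 :: real^'n))"
      by (rule norm_triangle_ineq)
    also have "\<dots> = s + t" using that by (simp add: norm_axis_1)
    also have "\<dots> < min d1 d2" using that h d1 d2 by (simp add: h_def)
    finally show ?thesis .
  qed
  have sub: "\<forall>s t. 0 \<le> s \<and> s \<le> h \<and> 0 \<le> t \<and> t \<le> h \<longrightarrow> x + s *\<^sub>R axis a 1 + t *\<^sub>R axis b 1 \<in> \<Omega>" for a b :: 'n
    using close d2 by (auto simp: dist_commute subset_eq)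
  have near: "\<bar>H (x + s *\<^sub>R axis a 1 + t *\<^sub>R axis b 1) $ c $ c' - H x $ c $ c'\<bar> < e"
    if "0 \<le> s" "s \<le> h" "0 \<le> t" "t \<le> h" for s t and a b c c' :: 'n
  proof -
    let ?p = "x + s *\<^sub>R axis a 1 + t *\<^sub>R axis b 1"
    have "?p \<in> \<Omega>" using sub that by blast
    moreover have "dist ?p x < d1" using close[OF that] by simp
    ultimately have "dist (H ?p) (H x) < e" using d1 by blast
    moreover have "\<bar>(H ?p - H x) $ c $ c'\<bar> \<le> norm (H ?p - H x)" by (rule entry_le_norm)
    ultimately show ?thesis by (simp add: dist_norm)
  qed
  obtain s1 t1 where st1: "0 \<le> s1" "s1 \<le> h" "0 \<le> t1" "t1 \<le> h"
    "f (x + h *\<^sub>R axis i 1 + h *\<^sub>R axis j 1) - f (x + h *\<^sub>R axis i 1) - f (x + h *\<^sub>R axis j 1) + f x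
       = h^2 * H (x + s1 *\<^sub>R axis i 1 + t1 *\<^sub>R axis j 1) $ i $ j"
    using mixed[OF der h sub[of i j]] by blast
  obtain s2 t2 where st2: "0 \<le> s2" "s2 \<le> h" "0 \<le> t2" "t2 \<le> h"
    "f (x + h *\<^sub>R axis j 1 + h *\<^sub>R axis i 1) - f (x + h *\<^sub>R axis j 1) - f (x + h *\<^sub>R axis i 1) + f x
       = h^2 * H (x + s2 *\<^sub>R axis j 1 + t2 *\<^sub>R axis i 1) $ j $ i"
    using mixed[OF der h sub[of j i]] by blast
  have "x + h *\<^sub>R axis j 1 + h *\<^sub>R axis i 1 = x + h *\<^sub>R axis i 1 + h *\<^sub>R axis j 1"
    by (simp add: algebra_simps)
  then have "f (x + h *\<^sub>R axis j 1 + h *\<^sub>R axis i 1) = f (x + h *\<^sub>R axis i 1 + h *\<^sub>R axis j 1)"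
    by (rule arg_cong)
  then have "h^2 * H (x + s1 *\<^sub>R axis i 1 + t1 *\<^sub>R axis j 1) $ i $ j =
             h^2 * H (x + s2 *\<^sub>R axis j 1 + t2 *\<^sub>R axis i 1) $ j $ i"
    using st1(5) st2(5) by linarith
  then have eqH: "H (x + s1 *\<^sub>R axis i 1 + t1 *\<^sub>R axis j 1) $ i $ j =
             H (x + s2 *\<^sub>R axis j 1 + t2 *\<^sub>R axis i 1) $ j $ i"
    using h by simp
  have "\<bar>H x $ i $ j - H x $ j $ i\<bar> < 2 * e"
    using near[OF st1(1-4), of i j i j] near[OF st2(1-4), of j i j i] eqH by linarith
  then show False by (simp add: e_def)
qed


lemma matrix_app_bound:
  fixes A :: "real^'n^'m"
  shows "norm (A *v h) \<le> (real CARD('m) * real CARD('n)) * norm A * norm h"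
proof -
  have bl: "bounded_linear ((*v) A)" by (simp add: matrix_vector_mul_bounded_linear)
  have "norm (A *v h) \<le> onorm ((*v) A) * norm h" using onorm[OF bl] .
  also have "onorm ((*v) A) \<le> (\<Sum>i\<in>UNIV. \<Sum>j\<in>UNIV. \<bar>A $ i $ j\<bar>)"
    by (rule onorm_le_matrix_component_sum)
  also have "\<dots> \<le> (\<Sum>i\<in>(UNIV::'m set). \<Sum>j\<in>(UNIV::'n set). norm A)"
  proof (intro sum_mono)
    fix i j
    have "\<bar>A $ i $ j\<bar> \<le> norm (A $ i)" using component_le_norm_cart[of "A $ i" j] by simp
    also have "\<dots> \<le> norm A" by (rule Finite_Cartesian_Product.norm_nth_le)
    finally show "\<bar>A $ i $ j\<bar> \<le> norm A" .
  qed
  also have "\<dots> = (real CARD('m) * real CARD('n)) * norm A" by simp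
  finally show ?thesis by (simp add: mult_right_mono)
qed

lemma deriv_at_zero:
  fixes F :: "real^'n \<Rightarrow> real \<Rightarrow> 'b::banach" and G :: "real^'n \<Rightarrow> real \<Rightarrow> 'c::real_normed_vector"
    and app :: "'c \<Rightarrow> real^'n \<Rightarrow> 'b"
  assumes app: "\<And>A B h. norm (app A h - app B h) \<le> C * norm (A - B) * norm h"
    and C: "C \<ge> 0" and T: "T > 0" and r: "r > 0"
    and der: "\<And>y t. y \<in> ball x r \<Longrightarrow> 0 < t \<Longrightarrow> t < T \<Longrightarrow> ((\<lambda>y. F y t) has_derivative app (G y t)) (at y)"
    and K: "compact K" "ball x r \<times> {0..T} \<subseteq> K"
    and contF: "continuous_on K (\<lambda>(y,t). F y t)" and contG: "continuous_on K (\<lambda>(y,t). G y t)"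
  shows "((\<lambda>y. F y 0) has_derivative app (G x 0)) (at x)"
proof -
  define t where "t n = T / real (n + 2)" for n
  have tpos: "0 < t n" "t n < T" for n
  proof -
    have "real (n + 2) > 1" by simp
    then show "0 < t n" "t n < T" using T by (auto simp: t_def field_simps intro: add_pos_nonneg)
  qed
  have tlim: "t \<longlonglongrightarrow> 0"
    unfolding t_def using LIMSEQ_ignore_initial_segment[OF lim_const_over_n[of T], of 2] by simp
  have uc: "uniformly_continuous_on K (\<lambda>(y,t). G y t)"
    using compact_uniformly_continuous[OF contG K(1)] .
  have nle: "\<forall>\<^sub>F n in sequentially. \<forall>y\<in>ball x r. \<forall>h. norm (app (G y (t n)) h - app (G y 0) h) \<le> e * norm h"
    if e: "e > 0" for e
  proof -
    define e' where "e' = e / (C + 1)"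
    have e': "e' > 0" using e C by (simp add: e'_def)
    obtain d where d: "d > 0" "\<forall>p\<in>K. \<forall>q\<in>K. dist q p < d \<longrightarrow> dist ((\<lambda>(y,t). G y t) q) ((\<lambda>(y,t). G y t) p) < e'"
      using uc e' unfolding uniformly_continuous_on_def by blast
    have "\<forall>\<^sub>F n in sequentially. t n < d" using order_tendstoD(2)[OF tlim d(1)] .
    then show ?thesis
    proof (rule eventually_mono)
      fix n assume tn: "t n < d"
      show "\<forall>y\<in>ball x r. \<forall>h. norm (app (G y (t n)) h - app (G y 0) h) \<le> e * norm h"
      proof (intro ballI allI)
        fix y h assume y: "y \<in> ball x r"
        have p1: "(y, t n) \<in> K" "(y, 0) \<in> K" using K(2) y tpos[of n] T by auto
        have "dist (y, t n) (y, 0) < d" using tn tpos[of n] by (simp add: dist_Pair_Pair)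
        then have "dist (G y (t n)) (G y 0) < e'" using d(2) p1 by fastforce
        then have ng: "norm (G y (t n) - G y 0) \<le> e'" by (simp add: dist_norm)
        have "norm (app (G y (t n)) h - app (G y 0) h) \<le> C * norm (G y (t n) - G y 0) * norm h"
          by (rule app)
        also have "\<dots> \<le> C * e' * norm h"
          by (intro mult_right_mono mult_left_mono ng C) simp
        also have "\<dots> \<le> e * norm h"
        proof (intro mult_right_mono)
          have "C * e' = e * (C / (C + 1))" using C by (simp add: e'_def field_simps)
          also have "\<dots> \<le> e * 1" using C e by (intro mult_left_mono) auto
          finally show "C * e' \<le> e" by simp
        qed simp
        finally show "norm (app (G y (t n)) h - app (G y 0) h) \<le> e * norm h" .
      qed
    qed
  qed
  have seqlim: "(\<lambda>n. F y (t n)) \<longlonglongrightarrow> F y 0" if y: "y \<in> ball x r" for y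
  proof -
    have "((\<lambda>n. (y, t n)) \<longlongrightarrow> (y, 0)) sequentially"
      by (intro tendsto_Pair tendsto_const tlim)
    moreover have "(y, 0) \<in> K" using K(2) y T by auto
    moreover have "\<forall>\<^sub>F n in sequentially. (y, t n) \<in> K"
      using K(2) y tpos by (auto intro!: always_eventually simp: less_imp_le)
    ultimately have "((\<lambda>n. (\<lambda>(y,t). F y t) (y, t n)) \<longlongrightarrow> (\<lambda>(y,t). F y t) (y, 0)) sequentially"
      by (intro continuous_on_tendsto_compose[OF contF])
    then show ?thesis by simp
  qed
  have derw: "((\<lambda>y. F y (t n)) has_derivative app (G y (t n))) (at y within ball x r)"
    if "y \<in> ball x r" for n y
    using der[OF that tpos(1) tpos(2)] by (rule has_derivative_at_withinI)
  have xb0: "x \<in> ball x r" using r by simp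
  obtain g where g: "\<forall>y\<in>ball x r. (\<lambda>n. F y (t n)) \<longlonglongrightarrow> g y \<and> (g has_derivative app (G y 0)) (at y within ball x r)"
    using has_derivative_sequence[where f="\<lambda>n y. F y (t n)" and f'="\<lambda>n y. app (G y (t n))"
        and g'="\<lambda>y. app (G y 0)" and S="ball x r", OF convex_ball derw nle xb0 seqlim[OF xb0]]
    by auto
  have geq: "g y = F y 0" if "y \<in> ball x r" for y
    using LIMSEQ_unique g seqlim that by blast
  have xb: "x \<in> ball x r" using r by simp
  then have "(g has_derivative app (G x 0)) (at x within ball x r)" using g by blast
  then have "(g has_derivative app (G x 0)) (at x)"
    by (simp add: at_within_open[OF xb open_ball])
  then show ?thesis
    by (rule has_derivative_transform_within_open[OF _ open_ball, of _ _ x]) (use r geq in auto)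
qed


lemma continuous_Tsum: "continuous_on UNIV (\<lambda>S::real^'n^'n. Tsum p S)"
  unfolding Tsum_def
  by (intro continuous_intros continuous_on_sum continuous_on_prod continuous_on_mult
        continuous_on_const)

theorem theorem3p2:
  fixes \<Omega> :: "(real^'n) set"
    and m :: nat and T \<nu> :: real
    and f :: "real^'n \<Rightarrow> real \<Rightarrow> real"
    and \<phi> :: "real^'n \<Rightarrow> real \<Rightarrow> real"
    and D\<phi> :: "real^'n \<Rightarrow> real^'n"
    and H\<phi> :: "real^'n \<Rightarrow> real^'n^'n"
    and x0 x1 :: "real^'n"
  assumes dom: "open \<Omega>" "connected \<Omega>" "bounded \<Omega>" "\<Omega> \<noteq> {}"
    and m: "1 \<le> m" "m \<le> CARD('n)"
    and T: "T > 0"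
    and f_pos: "\<nu> > 0" "\<forall>x\<in>closure \<Omega>. \<forall>t\<in>{0..T}. f x t \<ge> \<nu>"
    and phi_C2: "\<forall>x\<in>\<Omega>. ((\<lambda>y. \<phi> y 0) has_derivative (\<lambda>h. D\<phi> x \<bullet> h)) (at x) \<and>
                          (D\<phi> has_derivative (\<lambda>h. H\<phi> x *v h)) (at x)"
      "continuous_on \<Omega> H\<phi>"
    and x0: "x0 \<in> \<Omega>" "kpositive (m - 1) (H\<phi> x0)"
    and x1: "x1 \<in> \<Omega>" "\<not> kpositive (m - 1) (H\<phi> x1)"
  shows "\<not> (\<exists>u Du H ut.
            C21_closure TYPE('n) \<Omega> T u Du H ut \<and>
            (\<forall>x\<in>closure \<Omega>. \<forall>t\<in>{0..T}. Em m (ut x t) (H x t) = f x t) \<and>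
            (\<forall>x\<in>\<Omega>. u x 0 = \<phi> x 0) \<and>
            (\<forall>x\<in>frontier \<Omega>. \<forall>t\<in>{0..T}. u x t = \<phi> x t))"
proof
  assume "\<exists>u Du H ut.
            C21_closure TYPE('n) \<Omega> T u Du H ut \<and>
            (\<forall>x\<in>closure \<Omega>. \<forall>t\<in>{0..T}. Em m (ut x t) (H x t) = f x t) \<and>
            (\<forall>x\<in>\<Omega>. u x 0 = \<phi> x 0) \<and>
            (\<forall>x\<in>frontier \<Omega>. \<forall>t\<in>{0..T}. u x t = \<phi> x t)"
  then obtain u Du H ut where C21: "C21_closure TYPE('n) \<Omega> T u Du H ut"
    and eqn: "\<forall>x\<in>closure \<Omega>. \<forall>t\<in>{0..T}. Em m (ut x t) (H x t) = f x t"
    and init: "\<forall>x\<in>\<Omega>. u x 0 = \<phi> x 0" by blast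
  define k where "k = m - 1"
  have k1: "1 \<le> k"
  proof (rule ccontr)
    assume "\<not> 1 \<le> k"
    then have "m - 1 = 0" by (simp add: k_def)
    then show False using x1(2) by (simp add: kpositive_def)
  qed
  have mk: "m = k + 1" using k1 by (simp add: k_def)
  have kN: "k + 1 \<le> CARD('n)" using m mk by simp
  define K where "K = closure \<Omega> \<times> {0..T}"
  have cK: "compact K" unfolding K_def
    by (intro compact_Times compact_Icc) (simp add: dom(3))
  have der: "\<forall>x\<in>\<Omega>. \<forall>t\<in>{0<..<T}.
        ((\<lambda>y. u y t) has_derivative (\<lambda>h. Du x t \<bullet> h)) (at x) \<and>
        ((\<lambda>y. Du y t) has_derivative (\<lambda>h. H x t *v h)) (at x)"
    and cu: "continuous_on K (\<lambda>(x,t). u x t)" and cDu: "continuous_on K (\<lambda>(x,t). Du x t)"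
    and cH: "continuous_on K (\<lambda>(x,t). H x t)"
    using C21 unfolding C21_closure_def K_def by auto
  have H0: "H x 0 = H\<phi> x" if x: "x \<in> \<Omega>" for x
  proof -
    obtain r where r: "r > 0" "ball x r \<subseteq> \<Omega>" using dom(1) x open_contains_ball by blast
    have bK: "ball x r \<times> {0..T} \<subseteq> K" using r closure_subset unfolding K_def by fastforce
    have Du0: "Du y 0 = D\<phi> y" if y: "y \<in> \<Omega>" for y
    proof -
      obtain r' where r': "r' > 0" "ball y r' \<subseteq> \<Omega>" using dom(1) y open_contains_ball by blast
      have bK': "ball y r' \<times> {0..T} \<subseteq> K" using r' closure_subset unfolding K_def by fastforce
      have d1: "((\<lambda>y. u y 0) has_derivative (\<lambda>h. Du y 0 \<bullet> h)) (at y)"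
      proof (rule deriv_at_zero[where F=u and G=Du and app="\<lambda>A h. A \<bullet> h" and C=1, OF _ _ T r'(1) _ cK bK' cu cDu])
        show "norm (A \<bullet> h - B \<bullet> h) \<le> 1 * norm (A - B) * norm h" for A B h :: "real^'n"
          using Cauchy_Schwarz_ineq2[of "A - B" h] by (simp add: inner_diff_left)
        show "((\<lambda>y. u y t) has_derivative (\<lambda>h. Du z t \<bullet> h)) (at z)"
          if "z \<in> ball y r'" "0 < t" "t < T" for z t
          using der that r'(2) by auto
      qed simp
      have d2: "((\<lambda>y. \<phi> y 0) has_derivative (\<lambda>h. Du y 0 \<bullet> h)) (at y)"
        by (rule has_derivative_transform_within_open[OF d1 dom(1) y]) (use init in auto)
      have "(\<lambda>h. Du y 0 \<bullet> h) = (\<lambda>h. D\<phi> y \<bullet> h)"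
        using has_derivative_unique[OF d2] phi_C2(1) y by blast
      then have "(Du y 0 - D\<phi> y) \<bullet> (Du y 0 - D\<phi> y) = 0"
        by (metis (no_types) inner_diff_left right_minus_eq)
      then show ?thesis by simp
    qed
    have d1: "((\<lambda>y. Du y 0) has_derivative (\<lambda>h. H x 0 *v h)) (at x)"
    proof (rule deriv_at_zero[where F=Du and G=H and app="\<lambda>A h. A *v h"
          and C="real CARD('n) * real CARD('n)", OF _ _ T r(1) _ cK bK cDu cH])
      show "norm (A *v h - B *v h) \<le> (real CARD('n) * real CARD('n)) * norm (A - B) * norm h"
        for A B :: "real^'n^'n" and h :: "real^'n"
        using matrix_app_bound[of "A - B" h] by (simp add: matrix_vector_mult_diff_rdistrib)
      show "((\<lambda>y. Du y t) has_derivative (\<lambda>h. H z t *v h)) (at z)"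
        if "z \<in> ball x r" "0 < t" "t < T" for z t
        using der that r(2) by auto
    qed simp
    have d2: "(D\<phi> has_derivative (\<lambda>h. H x 0 *v h)) (at x)"
      by (rule has_derivative_transform_within_open[OF d1 dom(1) x]) (use Du0 in auto)
    have "(\<lambda>h. H x 0 *v h) = (\<lambda>h. H\<phi> x *v h)"
      using has_derivative_unique[OF d2] phi_C2(1) x by blast
    then show ?thesis by (simp add: matrix_eq fun_eq_iff)
  qed
  have sym: "H\<phi> x $ i $ j = H\<phi> x $ j $ i" if "x \<in> \<Omega>" for x i j
    by (rule hessian_sym[OF dom(1) phi_C2(1) phi_C2(2) that])
  have pos: "- ut x 0 * Tsum k (H\<phi> x) + Tsum (k + 1) (H\<phi> x) > 0" if x: "x \<in> \<Omega>" for x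
  proof -
    have "x \<in> closure \<Omega>" using x closure_subset by blast
    then have "Em m (ut x 0) (H x 0) = f x 0" using eqn T by auto
    moreover have "f x 0 \<ge> \<nu>" using f_pos(2) \<open>x \<in> closure \<Omega>\<close> T by auto
    ultimately show ?thesis using f_pos(1) H0[OF x] by (simp add: Em_def mk)
  qed
  define g where "g p x = Tsum p (H\<phi> x)" for p x
  have cg: "continuous_on \<Omega> (g p)" for p
    unfolding g_def[abs_def]
    by (rule continuous_on_compose2[OF continuous_Tsum phi_C2(2)]) auto
  define A where "A = (\<Inter>p\<in>{1..k}. \<Omega> \<inter> g p -` {0<..})"
  have Aeq: "A = (\<Inter>p\<in>{1..k}. \<Omega> \<inter> g p -` {0..})"
  proof
    show "A \<subseteq> (\<Inter>p\<in>{1..k}. \<Omega> \<inter> g p -` {0..})" unfolding A_def by auto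
    show "(\<Inter>p\<in>{1..k}. \<Omega> \<inter> g p -` {0..}) \<subseteq> A"
    proof
      fix x assume xa: "x \<in> (\<Inter>p\<in>{1..k}. \<Omega> \<inter> g p -` {0..})"
      then have x: "x \<in> \<Omega>" using k1 by auto
      have "\<forall>p\<in>{1..k}. Tsum p (H\<phi> x) \<ge> 0" using xa by (auto simp: g_def)
      then have "\<forall>p\<in>{1..k}. Tsum p (H\<phi> x) > 0"
        by (intro core[OF _ k1 kN _ pos[OF x]]) (use sym[OF x] in auto)
      then show "x \<in> A" using x by (auto simp: A_def g_def)
    qed
  qed
  have op: "openin (top_of_set \<Omega>) A" unfolding A_def
    by (intro openin_INT2 continuous_openin_preimage_gen[OF cg]) (use k1 in auto)
  have cl: "closedin (top_of_set \<Omega>) A" unfolding Aeq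
    by (intro closedin_INT continuous_closedin_preimage[OF cg]) (use k1 in auto)
  have "x0 \<in> A"
  proof -
    have "\<forall>p\<in>{1..k}. Tsum p (H\<phi> x0) > 0" using x0(2) k1 by (auto simp: kpositive_def k_def)
    then show ?thesis using x0(1) by (auto simp: A_def g_def)
  qed
  then have "A = \<Omega>" using op cl dom(2) unfolding connected_clopen by blast
  then have "x1 \<in> A" using x1(1) by simp
  then have "\<forall>p\<in>{1..k}. Tsum p (H\<phi> x1) > 0" unfolding A_def g_def by blast
  moreover have "symmetric_mat (H\<phi> x1)"
    unfolding symmetric_mat_def using sym[OF x1(1)] by (simp add: vec_eq_iff transpose_def)
  ultimately have "kpositive (m - 1) (H\<phi> x1)" by (simp add: kpositive_def k_def)
  then show False using x1(2) by simp
qed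


end
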